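(* Let $\lambda$ be a generic normalized additively alternating $n\times n$ complex matrix with biresidue matrix $b$, and let $I\subseteq\{0,\dots,n-2\}$ be such that $\{i,i+1\}$ is a smoothable edge of $b$ for every $i\in I$. Then the smoothable weights $\boldsymbol\theta_i$, $i\in I$, are linearly independent over $\mathbb{C}$.
   Context: Additively alternating: $\lambda_{ji}=-\lambda_{ij}$; normalized: rows sum to $0$. $\lambda$ is generic if it has rank $n-1$ and every relevant $\operatorname{EExp}(\lambda)$-Hochschild-contributing weight is $\lambda$-Poisson-contributing, where $\operatorname{EExp}(\lambda)=(e^{\lambda_{ij}})$; a weight $\mathbf w\in\mathbb{Z}^n$ is relevant if $w_i\ge-1$, $\sum w_i=0$; $q$-Hochschild-contributing if $w_i\ge-1$ for all $i$ and $\prod_jq_{ij}^{w_j}=1$ whenever $w_i\ge0$; $\lambda$-Poisson-contributing if $w_i\ge-1$ for all $i$ and $\sum_j\lambda_{ij}w_j=0$ whenever $w_i\ge0$. The biresidue matrix is the unique normalized alternating $b$ with $b|_\Delta=(\lambda|_\Delta)^{-1}$, $\Delta=\{z\in\mathbb{C}^n:\sum z_i=0\}$. The edge $\{i,j\}$ is smoothable if $b_{ij}\ne0$ and $(b_{jk}+b_{ki})/b_{ij}\in\mathbb{Z}_{\ge0}$ for $k\ne i,j$; its smoothable weight $\boldsymbol\theta$ has $\theta_i=\theta_j=-1$ and $\theta_k=(b_{jk}+b_{ki})/b_{ij}$ for $k\neq i,j$; $\boldsymbol\theta_i$ denotes the smoothable weight of $\{i,i+1\}$. *)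

theory Defs
  imports Complex_Main "Jordan_Normal_Form.DL_Rank"
begin

text \<open>n x n complex matrices are functions nat => nat => complex, indices 0..n-1;
weights are functions nat => int, only the entries with index < n matter.\<close>

definition add_alternating :: "nat \<Rightarrow> (nat \<Rightarrow> nat \<Rightarrow> complex) \<Rightarrow> bool" where
  "add_alternating n L \<longleftrightarrow> (\<forall>i<n. \<forall>j<n. L j i = - L i j)"

definition normalized :: "nat \<Rightarrow> (nat \<Rightarrow> nat \<Rightarrow> complex) \<Rightarrow> bool" where
  "normalized n L \<longleftrightarrow> (\<forall>i<n. (\<Sum>j<n. L i j) = 0)"

definition to_mat :: "nat \<Rightarrow> (nat \<Rightarrow> nat \<Rightarrow> complex) \<Rightarrow> complex mat" where
  "to_mat n L = mat n n (\<lambda>(i,j). L i j)"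

definition mat_rank :: "nat \<Rightarrow> (nat \<Rightarrow> nat \<Rightarrow> complex) \<Rightarrow> nat" where
  "mat_rank n L = vec_space.rank n (to_mat n L)"

definition EExp :: "(nat \<Rightarrow> nat \<Rightarrow> complex) \<Rightarrow> nat \<Rightarrow> nat \<Rightarrow> complex" where
  "EExp L = (\<lambda>i j. exp (L i j))"

definition relevant_weight :: "nat \<Rightarrow> (nat \<Rightarrow> int) \<Rightarrow> bool" where
  "relevant_weight n w \<longleftrightarrow> (\<forall>i<n. w i \<ge> -1) \<and> (\<Sum>i<n. w i) = 0"

definition hochschild_contributing :: "nat \<Rightarrow> (nat \<Rightarrow> nat \<Rightarrow> complex) \<Rightarrow> (nat \<Rightarrow> int) \<Rightarrow> bool" where
  "hochschild_contributing n q w \<longleftrightarrow>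
     (\<forall>i<n. w i \<ge> -1) \<and> (\<forall>i<n. w i \<ge> 0 \<longrightarrow> (\<Prod>j<n. q i j powi w j) = 1)"

definition poisson_contributing :: "nat \<Rightarrow> (nat \<Rightarrow> nat \<Rightarrow> complex) \<Rightarrow> (nat \<Rightarrow> int) \<Rightarrow> bool" where
  "poisson_contributing n L w \<longleftrightarrow>
     (\<forall>i<n. w i \<ge> -1) \<and> (\<forall>i<n. w i \<ge> 0 \<longrightarrow> (\<Sum>j<n. L i j * of_int (w j)) = 0)"

definition generic :: "nat \<Rightarrow> (nat \<Rightarrow> nat \<Rightarrow> complex) \<Rightarrow> bool" where
  "generic n L \<longleftrightarrow> mat_rank n L = n - 1 \<and>
     (\<forall>w. relevant_weight n w \<and> hochschild_contributing n (EExp L) w \<longrightarrow> poisson_contributing n L w)"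

definition Delta :: "nat \<Rightarrow> (nat \<Rightarrow> complex) set" where
  "Delta n = {z. (\<forall>i\<ge>n. z i = 0) \<and> (\<Sum>i<n. z i) = 0}"

definition mv :: "nat \<Rightarrow> (nat \<Rightarrow> nat \<Rightarrow> complex) \<Rightarrow> (nat \<Rightarrow> complex) \<Rightarrow> nat \<Rightarrow> complex" where
  "mv n L z = (\<lambda>i. if i < n then (\<Sum>j<n. L i j * z j) else 0)"

definition is_biresidue :: "nat \<Rightarrow> (nat \<Rightarrow> nat \<Rightarrow> complex) \<Rightarrow> (nat \<Rightarrow> nat \<Rightarrow> complex) \<Rightarrow> bool" where
  "is_biresidue n L b \<longleftrightarrow> add_alternating n b \<and> normalized n b \<and>
     (\<forall>z\<in>Delta n. mv n b (mv n L z) = z \<and> mv n L (mv n b z) = z)"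

definition smoothable_edge :: "nat \<Rightarrow> (nat \<Rightarrow> nat \<Rightarrow> complex) \<Rightarrow> nat \<Rightarrow> nat \<Rightarrow> bool" where
  "smoothable_edge n b i j \<longleftrightarrow> b i j \<noteq> 0 \<and>
     (\<forall>k<n. k \<noteq> i \<and> k \<noteq> j \<longrightarrow> (\<exists>m::nat. (b j k + b k i) / b i j = of_nat m))"

definition smoothable_weight :: "(nat \<Rightarrow> nat \<Rightarrow> complex) \<Rightarrow> nat \<Rightarrow> nat \<Rightarrow> nat \<Rightarrow> complex" where
  "smoothable_weight b i j k = (if k = i \<or> k = j then -1 else (b j k + b k i) / b i j)"

end

theory Submission
  imports Defs
begin

theorem lemma5p2:
  fixes n :: nat and L b :: "nat \<Rightarrow> nat \<Rightarrow> complex" and I :: "nat set"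
  assumes "add_alternating n L" and "normalized n L" and "generic n L"
    and "is_biresidue n L b"
    and "I \<subseteq> {i. i + 1 < n}"
    and "\<forall>i\<in>I. smoothable_edge n b i (i + 1)"
  shows "\<forall>c :: nat \<Rightarrow> complex.
           (\<forall>k<n. (\<Sum>i\<in>I. c i * smoothable_weight b i (i + 1) k) = 0) \<longrightarrow> (\<forall>i\<in>I. c i = 0)"
proof (intro allI impI)
  fix c :: "nat \<Rightarrow> complex"
  assume hc: "\<forall>k<n. (\<Sum>i\<in>I. c i * smoothable_weight b i (i + 1) k) = 0"
  have alt: "\<And>i j. i < n \<Longrightarrow> j < n \<Longrightarrow> b j i = - b i j"
    using assms(4) unfolding is_biresidue_def add_alternating_def by blast
  have diag: "b i i = 0" if "i < n" for i
  proof -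
    have "b i i = - b i i" using alt[OF that that] .
    then show ?thesis by (simp add: equal_neg_zero)
  qed
  have fin: "finite I"
    by (rule finite_subset[OF assms(5)]) (auto intro: finite_subset[of _ "{..<n}"])
  have In: "\<And>i. i \<in> I \<Longrightarrow> i + 1 < n" using assms(5) by auto
  have bnz: "\<And>i. i \<in> I \<Longrightarrow> b i (i+1) \<noteq> 0"
    using assms(6) unfolding smoothable_edge_def by blast
  define d where "d i = c i / b i (i+1)" for i
  define z where "z k = (if k < n then (\<Sum>i\<in>I. d i * ((if k = i then 1 else 0) - (if k = i + 1 then 1 else 0))) else (0::complex))" for k
  have term_eq: "(\<Sum>j<n. b k j * (d i * ((if j = i then 1 else 0) - (if j = i + 1 then 1 else 0))))
      = c i * smoothable_weight b i (i + 1) k" if "k < n" "i \<in> I" for k i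
  proof -
    have "(\<Sum>j<n. b k j * (d i * ((if j = i then 1 else 0) - (if j = i + 1 then 1 else 0))))
        = (\<Sum>j<n. (if j = i then d i * b k j else 0) - (if j = i + 1 then d i * b k j else 0))"
      by (rule sum.cong) auto
    also have "\<dots> = (\<Sum>j<n. (if j = i then d i * b k j else 0)) - (\<Sum>j<n. (if j = i + 1 then d i * b k j else 0))"
      by (rule sum_subtractf)
    also have "\<dots> = d i * (b k i - b k (i+1))"
      using In[OF that(2)] by (simp add: sum.delta algebra_simps)
    also have "\<dots> = c i * smoothable_weight b i (i + 1) k"
    proof -
      have ni: "i < n" "i + 1 < n" using In[OF that(2)] by auto
      show ?thesis
        using bnz[OF that(2)] diag ni that(1) alt[of k i] alt[of "i+1" k] alt[of "i" "i+1"]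
        unfolding smoothable_weight_def d_def
        by (auto simp: field_simps)
    qed
    finally show ?thesis .
  qed
  have bz: "mv n b z = (\<lambda>_. 0)"
  proof
    fix k
    show "mv n b z k = 0"
    proof (cases "k < n")
      case True
      have "mv n b z k = (\<Sum>j<n. b k j * z j)" using True by (simp add: mv_def)
      also have "\<dots> = (\<Sum>j<n. \<Sum>i\<in>I. b k j * (d i * ((if j = i then 1 else 0) - (if j = i + 1 then 1 else 0))))"
        by (rule sum.cong) (auto simp: z_def sum_distrib_left)
      also have "\<dots> = (\<Sum>i\<in>I. \<Sum>j<n. b k j * (d i * ((if j = i then 1 else 0) - (if j = i + 1 then 1 else 0))))"
        by (rule sum.swap)
      also have "\<dots> = (\<Sum>i\<in>I. c i * smoothable_weight b i (i + 1) k)"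
        using term_eq True by (auto intro: sum.cong)
      also have "\<dots> = 0" using hc True by blast
      finally show ?thesis .
    qed (simp add: mv_def)
  qed
  have zD: "z \<in> Delta n"
  proof -
    have "(\<Sum>k<n. z k) = (\<Sum>k<n. \<Sum>i\<in>I. d i * ((if k = i then 1 else 0) - (if k = i + 1 then 1 else 0)))"
      by (simp add: z_def)
    also have "\<dots> = (\<Sum>i\<in>I. \<Sum>k<n. d i * ((if k = i then 1 else 0) - (if k = i + 1 then 1 else 0)))"
      by (rule sum.swap)
    also have "\<dots> = 0"
    proof (rule sum.neutral, rule ballI)
      fix i assume iI: "i \<in> I"
      have "(\<Sum>k<n. d i * ((if k = i then 1 else 0) - (if k = i + 1 then 1 else 0)))
          = (\<Sum>k<n. (if k = i then d i else 0) - (if k = i + 1 then d i else 0))"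
        by (rule sum.cong) auto
      also have "\<dots> = (\<Sum>k<n. (if k = i then d i else 0)) - (\<Sum>k<n. (if k = i + 1 then d i else 0))"
        by (rule sum_subtractf)
      also have "\<dots> = 0" using In[OF iI] by simp
      finally show "(\<Sum>k<n. d i * ((if k = i then 1 else 0) - (if k = i + 1 then 1 else 0))) = 0" .
    qed
    finally show ?thesis unfolding Delta_def z_def by auto
  qed
  have L0: "mv n L (\<lambda>_. 0) = (\<lambda>_. 0)" by (auto simp: mv_def)
  have z0: "z = (\<lambda>_. 0)"
    using assms(4) zD bz L0 unfolding is_biresidue_def by metis
  have dz: "d i = 0" if "i \<in> I" for i
    using that
  proof (induction i rule: less_induct)
    case (less i)
    have "z i = (\<Sum>j\<in>I. d j * (if i = j then 1 else 0)) - (\<Sum>j\<in>I. d j * (if i = j + 1 then 1 else 0))"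
      using In[OF less.prems] by (simp add: z_def sum_subtractf algebra_simps)
    also have "(\<Sum>j\<in>I. d j * (if i = j + 1 then 1 else 0)) = 0"
      using less.IH by (intro sum.neutral) auto
    also have "(\<Sum>j\<in>I. d j * (if i = j then 1 else 0)) = d i"
      using fin less.prems by (simp add: if_distrib sum.delta cong: if_cong)
    finally show ?case using z0 by simp
  qed
  show "\<forall>i\<in>I. c i = 0"
    using dz bnz unfolding d_def by simp
qed

end
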